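(* Let $C \subset \mathbb{R}^n$ be convex and closed with nonempty interior, and let $h\colon C\to\mathbb{R}$ be Legendre on $C$, continuous on $C$, and satisfy condition (B): for every sequence $(x_k)_{k\in\mathbb{N}} \subset \mathrm{int}\, C$ and every $y \in C$, if $x_k \to y$ then $D_h(y,x_k) \to 0$. Then the set of extreme points of $C$ is locally finite (every bounded subset of $\mathbb{R}^n$ contains only finitely many extreme points of $C$). In particular, if $C$ is bounded, then $C$ is a polytope.
   Context: A convex function $h \colon C \to \mathbb{R}$ on a convex set $C\subset\mathbb{R}^n$ with nonempty interior is called Legendre if (1) $h$ is continuously differentiable on $\mathrm{int}\, C$ and $\|\nabla h(x)\| \to +\infty$ whenever $x \in \mathrm{int}\, C$ approaches a point of the boundary of $C$; and (2) $h$ is strictly convex on $\mathrm{int}\, C$. The Bregman divergence is $D_h(y,x) = h(y) - h(x) - \langle \nabla h(x), y - x\rangle$ for $y \in C$, $x \in \mathrm{int}\, C$. A polytope is the convex hull of finitely many points. *)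

theory Defs
  imports "HOL-Analysis.Analysis"
begin

text \<open>Gradient of a real-valued function on a Euclidean space (meaningful where h is
  differentiable; the Frechet derivative is then the functional v |-> grad h x \<bullet> v).\<close>
definition grad :: "('a::euclidean_space \<Rightarrow> real) \<Rightarrow> 'a \<Rightarrow> 'a" where
  "grad h x = (SOME g. (h has_derivative (\<lambda>v. g \<bullet> v)) (at x))"

definition strictly_convex_on :: "'a::real_vector set \<Rightarrow> ('a \<Rightarrow> real) \<Rightarrow> bool" where
  "strictly_convex_on S f \<longleftrightarrow> convex S \<and>
     (\<forall>x\<in>S. \<forall>y\<in>S. x \<noteq> y \<longrightarrow> (\<forall>u. 0 < u \<and> u < 1 \<longrightarrow>
        f (u *\<^sub>R x + (1 - u) *\<^sub>R y) < u * f x + (1 - u) * f y))"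

definition legendre :: "'a::euclidean_space set \<Rightarrow> ('a \<Rightarrow> real) \<Rightarrow> bool" where
  "legendre C h \<longleftrightarrow>
     convex_on C h \<and>
     (\<forall>x\<in>interior C. h differentiable (at x)) \<and>
     continuous_on (interior C) (grad h) \<and>
     (\<forall>y\<in>frontier C. filterlim (\<lambda>x. norm (grad h x)) at_top (at y within interior C)) \<and>
     strictly_convex_on (interior C) h"

definition bregman :: "('a::euclidean_space \<Rightarrow> real) \<Rightarrow> 'a \<Rightarrow> 'a \<Rightarrow> real" where
  "bregman h y x = h y - h x - grad h x \<bullet> (y - x)"

end

theory Submission
  imports Defs
begin

lemma grad_deriv:
  fixes h :: "'a::euclidean_space \<Rightarrow> real"
  assumes "h differentiable (at x)"
  shows "(h has_derivative (\<lambda>v. grad h x \<bullet> v)) (at x)"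
proof -
  obtain D where D: "(h has_derivative D) (at x)" using assms differentiable_def by blast
  have lin: "linear D" using D has_derivative_linear by blast
  have "D = (\<lambda>v. adjoint D 1 \<bullet> v)"
  proof
    fix v show "D v = adjoint D 1 \<bullet> v"
      using adjoint_works[OF lin, of v 1] by (simp add: inner_commute)
  qed
  then have "\<exists>g. (h has_derivative (\<lambda>v. g \<bullet> v)) (at x)" using D by metis
  then show ?thesis unfolding grad_def by (rule someI_ex)
qed

lemma tangent_ineq:
  fixes h :: "'a::euclidean_space \<Rightarrow> real"
  assumes cvx: "convex_on C h" and cC: "convex C" and x: "x \<in> C" and z: "z \<in> C"
    and d: "(h has_derivative (\<lambda>v. g \<bullet> v)) (at x)"
  shows "g \<bullet> (z - x) \<le> h z - h x"
proof -
  define \<phi> where "\<phi> t = h (x + t *\<^sub>R (z - x))" for t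
  have l: "((\<lambda>t. x + t *\<^sub>R (z - x)) has_derivative (\<lambda>t. t *\<^sub>R (z - x))) (at 0)"
    by (auto intro!: derivative_eq_intros)
  have d': "(h has_derivative (\<lambda>v. g \<bullet> v)) (at (x + 0 *\<^sub>R (z - x)))" using d by simp
  have "(\<phi> has_derivative (\<lambda>t. g \<bullet> (t *\<^sub>R (z - x)))) (at 0)"
    unfolding \<phi>_def using diff_chain_at[OF l d'] by (simp add: o_def)
  then have "(\<phi> has_field_derivative (g \<bullet> (z - x))) (at 0)"
    by (simp add: has_field_derivative_def mult.commute[of _ "g \<bullet> (z - x)"])
  then have "((\<lambda>t. (\<phi> t - \<phi> 0) / (t - 0)) \<longlongrightarrow> g \<bullet> (z - x)) (at 0)"
    using has_field_derivative_iff by blast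
  then have lim: "((\<lambda>t. (\<phi> t - \<phi> 0) / t) \<longlongrightarrow> g \<bullet> (z - x)) (at_right 0)"
    by (simp add: filterlim_at_split)
  have ev0: "(\<phi> t - \<phi> 0) / t \<le> h z - h x" if t: "0 < t" "t < 1" for t
  proof -
    have "x + t *\<^sub>R (z - x) = (1 - t) *\<^sub>R x + t *\<^sub>R z" by (simp add: algebra_simps)
    then have "\<phi> t \<le> t * h z + (1 - t) * h x"
      unfolding \<phi>_def using convex_onD[OF cvx, of t z x] convex_onD[OF cvx, of t x z] t x z by (simp add: add.commute)
    then have "\<phi> t - \<phi> 0 \<le> t * (h z - h x)" by (simp add: \<phi>_def algebra_simps)
    then show "(\<phi> t - \<phi> 0) / t \<le> h z - h x" using t by (simp add: divide_simps mult.commute)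
  qed
  have ev: "eventually (\<lambda>t. (\<phi> t - \<phi> 0) / t \<le> h z - h x) (at_right (0::real))"
    unfolding eventually_at_right_field using ev0 by (intro exI[of _ 1]) auto
  show ?thesis
    using tendsto_upperbound[OF lim ev] trivial_limit_at_right_real by blast
qed

lemma normal_near:
  fixes C :: "'a::euclidean_space set" and h :: "'a \<Rightarrow> real"
  assumes cC: "convex C" and clC: "closed C" and ne: "interior C \<noteq> {}"
    and leg: "legendre C h" and hc: "continuous_on C h" and yC: "y \<in> C"
    and bd: "\<forall>x\<in>interior C. dist x y < \<delta> \<longrightarrow> bregman h y x \<le> 1"
    and b: "b \<in> frontier C" and bdy: "dist b y < \<delta>"
  shows "\<exists>u. u \<noteq> 0 \<and> (\<forall>z\<in>C. u \<bullet> z \<le> u \<bullet> b) \<and> u \<bullet> b \<le> u \<bullet> y"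
proof -
  have bC: "b \<in> C" using frontier_subset_closed[OF clC] b by (rule subsetD)
  have cl: "closure (interior C) = C" using convex_closure_interior[OF cC ne] clC by (simp add: closure_closed)
  have bni: "b \<notin> interior C" using b by (simp add: frontier_def)
  have bcl: "b \<in> closure (interior C)" using bC cl by simp
  have blim: "b islimpt interior C" using bcl bni unfolding closure_def by simp
  have cvx: "convex_on C h" using leg unfolding legendre_def by (elim conjE)
  have dif: "\<forall>x\<in>interior C. h differentiable (at x)" using leg unfolding legendre_def by (elim conjE)
  have L3: "\<forall>y\<in>frontier C. filterlim (\<lambda>x. norm (grad h x)) at_top (at y within interior C)"
    using leg unfolding legendre_def by (elim conjE)
  have blow: "filterlim (\<lambda>x. norm (grad h x)) at_top (at b within interior C)"
    using L3 b by (rule bspec)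
  have "\<exists>x\<in>interior C. dist x b < 1 / (real k + 1) \<and> dist x y < \<delta> \<and> real k + 1 \<le> norm (grad h x)" for k
  proof -
    have ev0: "\<forall>Z. eventually (\<lambda>x. Z \<le> norm (grad h x)) (at b within interior C)"
      using blow unfolding filterlim_at_top .
    have "eventually (\<lambda>x. real k + 1 \<le> norm (grad h x)) (at b within interior C)"
      using ev0 by (rule spec)
    then have "\<exists>d>0. \<forall>x\<in>interior C. x \<noteq> b \<and> dist x b < d \<longrightarrow> real k + 1 \<le> norm (grad h x)"
      by (simp only: eventually_at)
    then obtain d where d: "d > 0" "\<forall>x\<in>interior C. x \<noteq> b \<and> dist x b < d \<longrightarrow> real k + 1 \<le> norm (grad h x)"
      by (elim exE conjE)
    define e where "e = min d (min (1 / (real k + 1)) (\<delta> - dist b y))"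
    have epos: "e > 0" using d bdy by (simp add: e_def)
    have "\<exists>x'\<in>interior C. x' \<noteq> b \<and> dist x' b < e"
      using islimpt_approachable[THEN iffD1, OF blim] epos by (elim allE impE)
    then obtain x where x: "x \<in> interior C" "x \<noteq> b" "dist x b < e"
      by (elim bexE conjE)
    have "dist x b < d" using x(3) unfolding e_def by linarith
    then have nx: "real k + 1 \<le> norm (grad h x)" using d(2) x(1,2) by blast
    have "dist x y \<le> dist x b + dist b y" by (rule dist_triangle)
    then have "dist x y < \<delta>" using x(3) unfolding e_def by linarith
    moreover have "dist x b < 1 / (real k + 1)" using x(3) unfolding e_def by linarith
    ultimately show ?thesis using x(1) nx by blast
  qed
  then have "\<forall>k. \<exists>x. x \<in> interior C \<and> dist x b < 1 / (real k + 1) \<and> dist x y < \<delta> \<and> real k + 1 \<le> norm (grad h x)"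
    by blast
  then obtain xs where xs0: "\<forall>k. xs k \<in> interior C \<and> dist (xs k) b < 1 / (real k + 1) \<and> dist (xs k) y < \<delta> \<and> real k + 1 \<le> norm (grad h (xs k))"
    using choice[of "\<lambda>k x. x \<in> interior C \<and> dist x b < 1 / (real k + 1) \<and> dist x y < \<delta> \<and> real k + 1 \<le> norm (grad h x)"] by blast
  have xs: "\<And>k. xs k \<in> interior C" "\<And>k. dist (xs k) b < 1 / (real k + 1)"
    "\<And>k. dist (xs k) y < \<delta>" "\<And>k. real k + 1 \<le> norm (grad h (xs k))"
    using xs0 by auto
  define g where "g k = grad h (xs k)" for k
  define u0 where "u0 k = g k /\<^sub>R norm (g k)" for k
  have gpos: "norm (g k) > 0" for k
  proof -
    have "(0::real) < real k + 1" by simp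
    then show ?thesis using xs(4)[of k] unfolding g_def by linarith
  qed
  have "u0 k \<in> sphere 0 1" for k using gpos[of k] by (simp add: u0_def)
  then obtain u r where u: "u \<in> sphere 0 1" and r: "strict_mono r" and ur: "(u0 \<circ> r) \<longlonglongrightarrow> u"
    using seq_compactE[OF compact_imp_seq_compact[OF compact_sphere], of u0 0 1] by blast
  have xlim: "xs \<longlonglongrightarrow> b"
  proof -
    have "(\<lambda>k. dist (xs k) b) \<longlonglongrightarrow> 0"
    proof (rule Lim_null_comparison[OF _ LIMSEQ_inverse_real_of_nat])
      show "\<forall>\<^sub>F k in sequentially. norm (dist (xs k) b) \<le> inverse (real (Suc k))"
        using xs(2) by (simp add: inverse_eq_divide add.commute less_imp_le)
    qed
    then show ?thesis using tendsto_dist_iff by blast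
  qed
  define X where "X = xs \<circ> r"
  define Nn where "Nn k = norm (g (r k))" for k
  define U where "U = u0 \<circ> r"
  have Xlim: "X \<longlonglongrightarrow> b" unfolding X_def using LIMSEQ_subseq_LIMSEQ[OF xlim r] .
  have Npos: "Nn k > 0" for k using gpos unfolding Nn_def by simp
  have Nge: "real k + 1 \<le> Nn k" for k
  proof -
    have "k \<le> r k" using seq_suble[OF r] by blast
    then show ?thesis using xs(4)[of "r k"] unfolding Nn_def g_def by simp
  qed
  have Ninv: "(\<lambda>k. inverse (Nn k)) \<longlonglongrightarrow> 0"
  proof (rule Lim_null_comparison[OF _ LIMSEQ_inverse_real_of_nat])
    show "\<forall>\<^sub>F k in sequentially. norm (inverse (Nn k)) \<le> inverse (real (Suc k))"
      using Nge Npos by (auto intro!: le_imp_inverse_le simp: add.commute less_imp_le)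
  qed
  have hX: "(\<lambda>k. h (X k)) \<longlonglongrightarrow> h b"
    using continuous_on_tendsto_compose[OF hc Xlim bC] xs(1) interior_subset unfolding X_def
    by (auto intro!: always_eventually)
  have XC: "X k \<in> interior C" for k using xs(1) unfolding X_def by simp
  have Ug: "U k = inverse (Nn k) *\<^sub>R grad h (X k)" for k
    unfolding U_def u0_def Nn_def X_def g_def by (simp add: divide_inverse_commute)
  have tang: "grad h (X k) \<bullet> (z - X k) \<le> h z - h (X k)" if "z \<in> C" for z k
    using tangent_ineq[OF cvx cC _ that grad_deriv] XC[of k] dif interior_subset by blast
  have ineq1: "U k \<bullet> (z - X k) \<le> (h z - h (X k)) * inverse (Nn k)" if "z \<in> C" for z k
  proof -
    have "U k \<bullet> (z - X k) = inverse (Nn k) * (grad h (X k) \<bullet> (z - X k))" by (simp add: Ug)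
    also have "\<dots> \<le> inverse (Nn k) * (h z - h (X k))"
      using tang[OF that, of k] Npos[of k] by (intro mult_left_mono) auto
    finally show ?thesis by (simp add: mult.commute)
  qed
  have ineq2: "(h y - h (X k) - 1) * inverse (Nn k) \<le> U k \<bullet> (y - X k)" for k
  proof -
    have "dist (X k) y < \<delta>" using xs(3) unfolding X_def by simp
    then have "bregman h y (X k) \<le> 1" using bd XC by blast
    then have "h y - h (X k) - 1 \<le> grad h (X k) \<bullet> (y - X k)" unfolding bregman_def by simp
    then have "inverse (Nn k) * (h y - h (X k) - 1) \<le> inverse (Nn k) * (grad h (X k) \<bullet> (y - X k))"
      using Npos[of k] by (intro mult_left_mono) auto
    then show ?thesis by (simp add: Ug mult.commute)
  qed
  have Ulim: "U \<longlonglongrightarrow> u" using ur unfolding U_def .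
  have n1: "u \<bullet> (z - b) \<le> 0" if "z \<in> C" for z
  proof (rule LIMSEQ_le[where X="\<lambda>k. U k \<bullet> (z - X k)" and Y="\<lambda>k. (h z - h (X k)) * inverse (Nn k)"])
    show "(\<lambda>k. U k \<bullet> (z - X k)) \<longlonglongrightarrow> u \<bullet> (z - b)" by (rule tendsto_inner[OF Ulim tendsto_diff[OF tendsto_const Xlim]])
    show "(\<lambda>k. (h z - h (X k)) * inverse (Nn k)) \<longlonglongrightarrow> 0"
      using tendsto_mult[OF tendsto_diff[OF tendsto_const hX] Ninv] by simp
    show "\<exists>N. \<forall>n\<ge>N. U n \<bullet> (z - X n) \<le> (h z - h (X n)) * inverse (Nn n)" using ineq1[OF that] by blast
  qed
  have n2: "0 \<le> u \<bullet> (y - b)"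
  proof (rule LIMSEQ_le[where Y="\<lambda>k. U k \<bullet> (y - X k)" and X="\<lambda>k. (h y - h (X k) - 1) * inverse (Nn k)"])
    show "(\<lambda>k. U k \<bullet> (y - X k)) \<longlonglongrightarrow> u \<bullet> (y - b)" by (rule tendsto_inner[OF Ulim tendsto_diff[OF tendsto_const Xlim]])
    show "(\<lambda>k. (h y - h (X k) - 1) * inverse (Nn k)) \<longlonglongrightarrow> 0"
      using tendsto_mult[OF tendsto_diff[OF tendsto_diff[OF tendsto_const hX] tendsto_const] Ninv] by simp
    show "\<exists>N. \<forall>n\<ge>N. (h y - h (X n) - 1) * inverse (Nn n) \<le> U n \<bullet> (y - X n)" using ineq2 by blast
  qed
  have "u \<noteq> 0" using u by auto
  then show ?thesis using n1 n2 by (intro exI[of _ u]) (auto simp: inner_diff_right)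
qed

lemma local_unique:
  fixes C :: "'a::euclidean_space set" and h :: "'a \<Rightarrow> real"
  assumes cC: "convex C" and clC: "closed C" and ne: "interior C \<noteq> {}"
    and leg: "legendre C h" and hc: "continuous_on C h"
    and condB: "\<And>xs y. (\<forall>k. xs k \<in> interior C) \<Longrightarrow> y \<in> C \<Longrightarrow> xs \<longlonglongrightarrow> y
                  \<Longrightarrow> (\<lambda>k. bregman h y (xs k)) \<longlonglongrightarrow> 0"
    and yC: "y \<in> C"
  shows "\<exists>\<delta>>0. \<forall>e. e extreme_point_of C \<and> dist e y < \<delta> \<longrightarrow> e = y"
proof -
  have cl: "closure (interior C) = C" using convex_closure_interior[OF cC ne] clC by (simp add: closure_closed)
  have "\<exists>\<delta>>0. \<forall>x\<in>interior C. dist x y < \<delta> \<longrightarrow> bregman h y x \<le> 1"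
  proof (rule ccontr)
    assume neg: "\<not> (\<exists>\<delta>>0. \<forall>x\<in>interior C. dist x y < \<delta> \<longrightarrow> bregman h y x \<le> 1)"
    have "\<exists>x. x \<in> interior C \<and> dist x y < 1 / (real k + 1) \<and> \<not> bregman h y x \<le> 1" for k :: nat
    proof -
      have "(0::real) < 1 / (real k + 1)" by simp
      then show ?thesis using neg by blast
    qed
    then obtain xs where xs0: "\<forall>k. xs k \<in> interior C \<and> dist (xs k) y < 1 / (real k + 1) \<and> \<not> bregman h y (xs k) \<le> 1"
      using choice[of "\<lambda>k x. x \<in> interior C \<and> dist x y < 1 / (real k + 1) \<and> \<not> bregman h y x \<le> 1"] by blast
    have xin: "\<forall>k. xs k \<in> interior C" using xs0 by blast
    have xlim: "xs \<longlonglongrightarrow> y"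
    proof -
      have "(\<lambda>k. dist (xs k) y) \<longlonglongrightarrow> 0"
      proof (rule Lim_null_comparison[OF _ LIMSEQ_inverse_real_of_nat])
        show "\<forall>\<^sub>F k in sequentially. norm (dist (xs k) y) \<le> inverse (real (Suc k))"
          using xs0 by (simp add: inverse_eq_divide add.commute less_imp_le)
      qed
      then show ?thesis using tendsto_dist_iff by blast
    qed
    have bl: "(\<lambda>k. bregman h y (xs k)) \<longlonglongrightarrow> 0" using condB[OF xin yC xlim] .
    have "eventually (\<lambda>k. bregman h y (xs k) < 1) sequentially"
      by (rule order_tendstoD(2)[OF bl]) simp
    then obtain M where "\<forall>k\<ge>M. bregman h y (xs k) < 1" unfolding eventually_sequentially by blast
    then have "bregman h y (xs M) < 1" by simp
    moreover have "\<not> bregman h y (xs M) \<le> 1" using xs0 by blast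
    ultimately show False by linarith
  qed
  then obtain \<delta> where \<delta>: "\<delta> > 0" "\<forall>x\<in>interior C. dist x y < \<delta> \<longrightarrow> bregman h y x \<le> 1"
    by blast
  have "e = y" if ext: "e extreme_point_of C" and edist: "dist e y < \<delta> / 2" for e
  proof (rule ccontr)
    assume ney: "e \<noteq> y"
    have eC: "e \<in> C" using ext unfolding extreme_point_of_def by blast
    define q where "q = 2 *\<^sub>R e - y"
    have mid: "midpoint y q = e" unfolding midpoint_eq_iff q_def by (simp add: algebra_simps scaleR_2)
    have yq: "y \<noteq> q"
    proof
      assume "y = q" then have "midpoint y q = y" by simp
      then show False using mid ney by simp
    qed
    have qy: "q - y = 2 *\<^sub>R (e - y)" unfolding q_def by (simp add: algebra_simps scaleR_2)
    have dq: "dist q y < \<delta>"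
    proof -
      have "dist q y = norm (q - y)" by (simp add: dist_norm)
      also have "\<dots> = 2 * norm (e - y)" using qy by simp
      also have "\<dots> = 2 * dist e y" by (simp add: dist_norm)
      finally show ?thesis using edist by simp
    qed
    have qC: "q \<notin> C"
    proof
      assume "q \<in> C"
      have "e \<in> open_segment y q" using mid yq midpoint_in_open_segment[of y q] by simp
      then show False using ext yC \<open>q \<in> C\<close> unfolding extreme_point_of_def by blast
    qed
    have "y \<in> closure (interior C)" using cl yC by simp
    then have "\<exists>c\<in>interior C. dist c y < \<delta>" using closure_approachable \<delta>(1) by blast
    then obtain c where c: "c \<in> interior C" "dist c y < \<delta>" by blast
    have cinC: "c \<in> C" using c(1) interior_subset by blast
    have segball: "closed_segment c q \<subseteq> ball y \<delta>"
      by (rule closed_segment_subset) (use c(2) dq in \<open>simp_all add: dist_commute\<close>)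
    have "closed_segment c q \<inter> frontier C \<noteq> {}"
    proof (rule connected_Int_frontier)
      show "connected (closed_segment c q)" by simp
      show "closed_segment c q \<inter> C \<noteq> {}" using cinC by blast
      show "closed_segment c q - C \<noteq> {}" using qC by blast
    qed
    then obtain b where bseg: "b \<in> closed_segment c q" and bfr: "b \<in> frontier C" by blast
    have bC: "b \<in> C" using frontier_subset_closed[OF clC] bfr by (rule subsetD)
    have bd: "dist b y < \<delta>" using segball bseg by (auto simp: dist_commute)
    obtain u where u: "u \<noteq> 0" "\<forall>z\<in>C. u \<bullet> z \<le> u \<bullet> b" "u \<bullet> b \<le> u \<bullet> y"
      using normal_near[OF cC clC ne leg hc yC \<delta>(2) bfr bd] by blast
    have ucb: "u \<bullet> c < u \<bullet> b"
    proof -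
      obtain \<epsilon> where \<epsilon>: "\<epsilon> > 0" "ball c \<epsilon> \<subseteq> C" using c(1) mem_interior by blast
      have nu: "norm u > 0" using u(1) by simp
      define t where "t = \<epsilon> / (2 * norm u)"
      have tpos: "t > 0" using \<epsilon>(1) nu by (simp add: t_def)
      have "dist c (c + t *\<^sub>R u) = t * norm u" using tpos by (simp add: dist_norm)
      also have "\<dots> = \<epsilon> / 2" using nu by (simp add: t_def)
      finally have "c + t *\<^sub>R u \<in> ball c \<epsilon>" using \<epsilon>(1) by simp
      then have "c + t *\<^sub>R u \<in> C" using \<epsilon>(2) by blast
      then have "u \<bullet> (c + t *\<^sub>R u) \<le> u \<bullet> b" using u(2) by blast
      moreover have "u \<bullet> (c + t *\<^sub>R u) = u \<bullet> c + t * (norm u)\<^sup>2"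
        by (simp add: inner_add_right power2_norm_eq_inner)
      moreover have "t * (norm u)\<^sup>2 > 0" using tpos nu by simp
      ultimately show ?thesis by linarith
    qed
    have uqb: "u \<bullet> q \<le> u \<bullet> b"
    proof -
      have "u \<bullet> q = 2 * (u \<bullet> e) - u \<bullet> y" unfolding q_def by (simp add: inner_diff_right)
      moreover have "u \<bullet> e \<le> u \<bullet> b" using u(2) eC by blast
      ultimately show ?thesis using u(3) by linarith
    qed
    obtain \<mu> where mu: "0 \<le> \<mu>" "\<mu> \<le> 1" "b = (1 - \<mu>) *\<^sub>R c + \<mu> *\<^sub>R q"
      using bseg unfolding in_segment by blast
    have "\<mu> \<noteq> 1"
    proof
      assume "\<mu> = 1" then have "b = q" using mu(3) by simp
      then show False using bC qC by simp
    qed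
    then have m1: "0 < 1 - \<mu>" using mu(2) by simp
    have "u \<bullet> b = (1 - \<mu>) * (u \<bullet> c) + \<mu> * (u \<bullet> q)" using mu(3) by (simp add: inner_add_right)
    moreover have "(1 - \<mu>) * (u \<bullet> c) < (1 - \<mu>) * (u \<bullet> b)" using m1 ucb by simp
    moreover have "\<mu> * (u \<bullet> q) \<le> \<mu> * (u \<bullet> b)" using mult_left_mono[OF uqb mu(1)] .
    ultimately have "u \<bullet> b < (1 - \<mu>) * (u \<bullet> b) + \<mu> * (u \<bullet> b)" by linarith
    then show False by (simp add: algebra_simps)
  qed
  then show ?thesis using \<delta>(1) by (intro exI[of _ "\<delta> / 2"]) auto
qed

theorem proposition1:
  fixes C :: "'a::euclidean_space set" and h :: "'a \<Rightarrow> real"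
  assumes "convex C" and "closed C" and "interior C \<noteq> {}"
    and "legendre C h"
    and "continuous_on C h"
    and condB: "\<And>xs y. (\<forall>k. xs k \<in> interior C) \<Longrightarrow> y \<in> C \<Longrightarrow> xs \<longlonglongrightarrow> y
                  \<Longrightarrow> (\<lambda>k. bregman h y (xs k)) \<longlonglongrightarrow> 0"
  shows "(\<forall>B. bounded B \<longrightarrow> finite {x \<in> B. x extreme_point_of C})
         \<and> (bounded C \<longrightarrow> polytope C)"
proof -
  have loc: "\<exists>\<delta>>0. \<forall>e. e extreme_point_of C \<and> dist e y < \<delta> \<longrightarrow> e = y" if "y \<in> C" for y
    using local_unique[OF assms(1-5) condB that] by blast
  have part1: "finite {x \<in> B. x extreme_point_of C}" if bB: "bounded B" for B
  proof (rule ccontr)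
    define S where "S = {x \<in> B. x extreme_point_of C}"
    assume "infinite {x \<in> B. x extreme_point_of C}"
    then have inf: "infinite S" unfolding S_def .
    have cpt: "compact (closure B)" using bB compact_closure by blast
    have sub: "S \<subseteq> closure B" unfolding S_def using closure_subset by blast
    obtain l where l: "l islimpt S"
      using Heine_Borel_imp_Bolzano_Weierstrass[OF cpt inf sub] by blast
    have SC: "S \<subseteq> C" unfolding S_def extreme_point_of_def by blast
    have "l islimpt C" using islimpt_subset[OF l SC] .
    then have lC: "l \<in> C" using assms(2) closed_limpt by blast
    obtain \<delta> where \<delta>: "\<delta> > 0" "\<forall>e. e extreme_point_of C \<and> dist e l < \<delta> \<longrightarrow> e = l"
      using loc[OF lC] by blast
    have "\<exists>x'\<in>S. x' \<noteq> l \<and> dist x' l < \<delta>"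
      using islimpt_approachable[THEN iffD1, OF l] \<delta>(1) by blast
    then obtain x' where "x' \<in> S" "x' \<noteq> l" "dist x' l < \<delta>" by blast
    then show False using \<delta>(2) unfolding S_def by blast
  qed
  have part2: "polytope C" if bC: "bounded C"
  proof -
    have cpt: "compact C" using bC assms(2) compact_eq_bounded_closed by blast
    have eq: "{x. x extreme_point_of C} = {x \<in> C. x extreme_point_of C}"
      unfolding extreme_point_of_def by blast
    have fin: "finite {x. x extreme_point_of C}" using part1[OF bC] eq by simp
    have "C = convex hull {x. x extreme_point_of C}"
      using Krein_Milman_Minkowski[OF cpt assms(1)] .
    then show ?thesis unfolding polytope_def using fin by blast
  qed
  show ?thesis using part1 part2 by blast
qed
end
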